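(* Let $f$ be a function, $x^\star$ one of its global optima with associated $(\nu,\rho)$, let $C>1$, and let $d=d(\nu,C,\rho)$. After a run of \texttt{SequOOL} with budget $n$ (deterministic feedback), the simple regret $r_n=f(x^\star)-f(x(n))$ satisfies: - if $d=0$, then $r_n\le \nu\rho^{\frac1C\lfloor n/\bar\log n\rfloor}$; - if $d>0$, then $r_n\le \nu\exp\!\Big(-\frac1d W\big(\frac{d\log(1/\rho)}{C}\lfloor n/\bar\log n\rfloor\big)\Big)$.
   Context: Let $\mathcal X$ be a set and $f:\mathcal X\to\mathbb R$ a function attaining its supremum; a point $x^\star$ with $f(x^\star)=\sup_{x\in\mathcal X}f(x)$ is a global optimum. Hierarchical partitioning $\mathcal P=\{\mathcal P_{h,i}\}$: - for every depth $h\ge 0$, the cells $\{\mathcal P_{h,i}\}_{1\le i\le I_h}$ form a partition of $\mathcal X$, and $\mathcal P_{0,1}=\mathcal X$; - each cell $\mathcal P_{h,i}$ is partitioned into finitely many children cells of depth $h+1$; - each cell has a fixed representative point $x_{h,i}\in\mathcal P_{h,i}$, and we write $f_{h,i}=f(x_{h,i})$; - for a global optimum $x^\star$, $i^\star_h$ is the index of the unique depth-$h$ cell containing $x^\star$. Local smoothness: a global optimum $x^\star$ has associated $(\nu,\rho)$, with $\nu>0$ and $\rho\in(0,1)$, if for all $h\in\mathbb N$ and all $x\in\mathcal P_{h,i^\star_h}$ we have $f(x)\ge f(x^\star)-\nu\rho^h$. Near-optimality dimension: for $\nu>0$, $C>1$, $\rho\in(0,1)$, let $\mathcal N_h(\epsilon)$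 be the number of depth-$h$ cells $\mathcal P_{h,i}$ with $\sup_{x\in\mathcal P_{h,i}}f(x)\ge f(x^\star)-\epsilon$. Define \[ d(\nu,C,\rho)=\inf\{d'\ge 0:\ \forall h\ge 0,\ \mathcal N_h(3\nu\rho^h)\le C\rho^{-d'h}\}, \] which is assumed finite. Notation: - $\bar\log n=\sum_{t=1}^n 1/t$ (the $n$-th harmonic number); - $W$ is the standard Lambert $W$ function: for $A\ge 0$, $W(A)$ is the unique $z\ge 0$ with $ze^z=A$. Deterministic feedback: evaluating a cell $\mathcal P_{h,i}$ returns $f_{h,i}$ exactly. Opening a cell means evaluating each of its children cells once. \texttt{SequOOL} with budget $n$: set $h_{\max}=\lfloor n/\bar\log n\rfloor$ and open $\mathcal P_{0,1}$. Then, for $h=1,2,\dots,h_{\max}$ in increasing order, open the $\lfloor h_{\max}/h\rfloor$ depth-$h$ cells having the largest values $f_{h,j}$ among the evaluated depth-$h$ cells (or all of them if there are fewer). Finally, output $x(n)$, a representative point $x_{h,i}$ of an evaluated cell maximizing $f_{h,i}$. *)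

theory Defs
  imports "HOL-Analysis.Analysis"
begin

text \<open>Depth-h cells are P h i for i in {1..I h}; representatives xr h i.
  Children of a cell P h i are the depth-(h+1) cells contained in it.\<close>
definition hier_partition ::
  "(nat \<Rightarrow> nat \<Rightarrow> 'a set) \<Rightarrow> (nat \<Rightarrow> nat) \<Rightarrow> (nat \<Rightarrow> nat \<Rightarrow> 'a) \<Rightarrow> bool" where
  "hier_partition P I xr \<longleftrightarrow>
     P 0 1 = UNIV \<and>
     (\<forall>h. \<forall>i\<in>{1..I h}. \<forall>j\<in>{1..I h}. i \<noteq> j \<longrightarrow> P h i \<inter> P h j = {}) \<and>
     (\<forall>h. (\<Union>i\<in>{1..I h}. P h i) = UNIV) \<and>
     (\<forall>h. \<forall>i\<in>{1..I h}. xr h i \<in> P h i) \<and>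
     (\<forall>h. \<forall>j\<in>{1..I (Suc h)}. \<exists>i\<in>{1..I h}. P (Suc h) j \<subseteq> P h i)"

definition cell_index :: "(nat \<Rightarrow> nat \<Rightarrow> 'a set) \<Rightarrow> (nat \<Rightarrow> nat) \<Rightarrow> 'a \<Rightarrow> nat \<Rightarrow> nat" where
  "cell_index P I x h = (THE i. i \<in> {1..I h} \<and> x \<in> P h i)"

definition global_opt :: "('a \<Rightarrow> real) \<Rightarrow> 'a \<Rightarrow> bool" where
  "global_opt f xs \<longleftrightarrow> (\<forall>x. f x \<le> f xs)"

definition local_smooth ::
  "(nat \<Rightarrow> nat \<Rightarrow> 'a set) \<Rightarrow> (nat \<Rightarrow> nat) \<Rightarrow> ('a \<Rightarrow> real) \<Rightarrow> 'a \<Rightarrow> real \<Rightarrow> real \<Rightarrow> bool" where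
  "local_smooth P I f xs \<nu> \<rho> \<longleftrightarrow> \<nu> > 0 \<and> 0 < \<rho> \<and> \<rho> < 1 \<and>
     (\<forall>h. \<forall>x\<in>P h (cell_index P I xs h). f x \<ge> f xs - \<nu> * \<rho> ^ h)"

definition near_opt_count ::
  "(nat \<Rightarrow> nat \<Rightarrow> 'a set) \<Rightarrow> (nat \<Rightarrow> nat) \<Rightarrow> ('a \<Rightarrow> real) \<Rightarrow> 'a \<Rightarrow> nat \<Rightarrow> real \<Rightarrow> nat" where
  "near_opt_count P I f xs h \<epsilon> = card {i \<in> {1..I h}. (SUP x\<in>P h i. f x) \<ge> f xs - \<epsilon>}"

definition near_opt_set ::
  "(nat \<Rightarrow> nat \<Rightarrow> 'a set) \<Rightarrow> (nat \<Rightarrow> nat) \<Rightarrow> ('a \<Rightarrow> real) \<Rightarrow> 'a \<Rightarrow> real \<Rightarrow> real \<Rightarrow> real \<Rightarrow> real set" where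
  "near_opt_set P I f xs \<nu> C \<rho> = {d'. d' \<ge> 0 \<and>
     (\<forall>h. real (near_opt_count P I f xs h (3 * \<nu> * \<rho> ^ h)) \<le> C * \<rho> powr (- d' * real h))}"

definition near_opt_dim ::
  "(nat \<Rightarrow> nat \<Rightarrow> 'a set) \<Rightarrow> (nat \<Rightarrow> nat) \<Rightarrow> ('a \<Rightarrow> real) \<Rightarrow> 'a \<Rightarrow> real \<Rightarrow> real \<Rightarrow> real \<Rightarrow> real" where
  "near_opt_dim P I f xs \<nu> C \<rho> = Inf (near_opt_set P I f xs \<nu> C \<rho>)"

definition lambertW :: "real \<Rightarrow> real" where
  "lambertW A = (THE z. z \<ge> 0 \<and> z * exp z = A)"

definition hmax :: "nat \<Rightarrow> nat" where
  "hmax n = nat \<lfloor>real n / harm n\<rfloor>"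

definition evals :: "(nat \<Rightarrow> nat \<Rightarrow> 'a set) \<Rightarrow> (nat \<Rightarrow> nat) \<Rightarrow> (nat \<Rightarrow> nat set) \<Rightarrow> nat \<Rightarrow> nat set" where
  "evals P I Op h = (case h of 0 \<Rightarrow> {}
     | Suc g \<Rightarrow> {j \<in> {1..I (Suc g)}. \<exists>i\<in>Op g. P (Suc g) j \<subseteq> P g i})"

text \<open>Op is the family of opened cells of a run of SequOOL with budget n
  (any tie-breaking among equal values is allowed).\<close>
definition sequool_run ::
  "(nat \<Rightarrow> nat \<Rightarrow> 'a set) \<Rightarrow> (nat \<Rightarrow> nat) \<Rightarrow> (nat \<Rightarrow> nat \<Rightarrow> 'a) \<Rightarrow> ('a \<Rightarrow> real) \<Rightarrow> nat \<Rightarrow> (nat \<Rightarrow> nat set) \<Rightarrow> bool" where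
  "sequool_run P I xr f n Op \<longleftrightarrow>
     Op 0 = {1} \<and>
     (\<forall>h. 1 \<le> h \<and> h \<le> hmax n \<longrightarrow>
        Op h \<subseteq> evals P I Op h \<and>
        card (Op h) = min (hmax n div h) (card (evals P I Op h)) \<and>
        (\<forall>j\<in>Op h. \<forall>j'\<in>evals P I Op h - Op h. f (xr h j') \<le> f (xr h j))) \<and>
     (\<forall>h. hmax n < h \<longrightarrow> Op h = {})"

definition sequool_output ::
  "(nat \<Rightarrow> nat \<Rightarrow> 'a set) \<Rightarrow> (nat \<Rightarrow> nat) \<Rightarrow> (nat \<Rightarrow> nat \<Rightarrow> 'a) \<Rightarrow> ('a \<Rightarrow> real) \<Rightarrow> (nat \<Rightarrow> nat set) \<Rightarrow> nat \<Rightarrow> nat \<Rightarrow> bool" where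
  "sequool_output P I xr f Op h i \<longleftrightarrow> i \<in> evals P I Op h \<and>
     (\<forall>h' j. j \<in> evals P I Op h' \<longrightarrow> f (xr h' j) \<le> f (xr h i))"

end

theory Submission
  imports Defs
begin

lemma lambertW_prop:
  assumes A: "(A::real) \<ge> 0"
  shows "lambertW A \<ge> 0 \<and> lambertW A * exp (lambertW A) = A"
proof -
  have mono: "z1 * exp z1 < z2 * exp z2" if "0 \<le> z1" "z1 < z2" for z1 z2 :: real
  proof -
    have "z1 * exp z1 \<le> z1 * exp z2" using that by (intro mult_left_mono) auto
    also have "\<dots> < z2 * exp z2" using that by (intro mult_strict_right_mono) auto
    finally show ?thesis .
  qed
  have ex: "\<exists>z. 0 \<le> z \<and> z \<le> A \<and> z * exp z = A"
  proof (rule IVT')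
    show "0 * exp 0 \<le> A" using A by simp
    have "A * 1 \<le> A * exp A" using A by (intro mult_left_mono) auto
    then show "A \<le> A * exp A" by simp
    show "0 \<le> A" by fact
    show "continuous_on {0..A} (\<lambda>z. z * exp z)" by (intro continuous_intros)
  qed
  have "\<exists>!z. z \<ge> 0 \<and> z * exp z = A"
  proof -
    from ex obtain z where z: "0 \<le> z" "z * exp z = A" by blast
    show ?thesis
    proof (rule ex1I[of _ z])
      show "z \<ge> 0 \<and> z * exp z = A" using z by simp
      fix y assume y: "y \<ge> 0 \<and> y * exp y = A"
      show "y = z"
      proof (rule ccontr)
        assume "y \<noteq> z"
        then consider "y < z" | "z < y" by linarith
        then show False
          using mono[of y z] mono[of z y] y z by cases auto
      qed
    qed
  qed
  then show ?thesis unfolding lambertW_def by (rule theI')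
qed

lemma cell_index_props:
  assumes part: "hier_partition P I xr"
  shows "cell_index P I x h \<in> {1..I h} \<and> x \<in> P h (cell_index P I x h)"
    and "j \<in> {1..I h} \<Longrightarrow> x \<in> P h j \<Longrightarrow> j = cell_index P I x h"
proof -
  have disj: "\<And>i j. i \<in> {1..I h} \<Longrightarrow> j \<in> {1..I h} \<Longrightarrow> i \<noteq> j \<Longrightarrow> P h i \<inter> P h j = {}"
    and cov: "(\<Union>i\<in>{1..I h}. P h i) = UNIV"
    using part unfolding hier_partition_def by blast+
  obtain i where i: "i \<in> {1..I h}" "x \<in> P h i" using cov by blast
  have ex1: "\<exists>!i. i \<in> {1..I h} \<and> x \<in> P h i"
    using i disj by blast
  show A: "cell_index P I x h \<in> {1..I h} \<and> x \<in> P h (cell_index P I x h)"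
    unfolding cell_index_def by (rule theI'[OF ex1])
  show "j \<in> {1..I h} \<Longrightarrow> x \<in> P h j \<Longrightarrow> j = cell_index P I x h"
    using ex1 A by blast
qed

lemma cell_index_0:
  assumes part: "hier_partition P I xr"
  shows "cell_index P I x 0 = 1"
proof -
  have "P 0 1 = UNIV" using part unfolding hier_partition_def by blast
  have "1 \<le> I 0" using cell_index_props(1)[OF part, of x 0] by auto
  then show ?thesis using cell_index_props(2)[OF part, of 1 0 x] \<open>P 0 1 = UNIV\<close> by auto
qed

lemma child_eval:
  assumes part: "hier_partition P I xr"
    and op: "cell_index P I x g \<in> Op g"
  shows "cell_index P I x (Suc g) \<in> evals P I Op (Suc g)"
proof -
  let ?c = "cell_index P I x (Suc g)"
  have c: "?c \<in> {1..I (Suc g)}" "x \<in> P (Suc g) ?c" using cell_index_props(1)[OF part] by auto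
  obtain i where i: "i \<in> {1..I g}" "P (Suc g) ?c \<subseteq> P g i"
    using part c(1) unfolding hier_partition_def by blast
  have "i = cell_index P I x g" using cell_index_props(2)[OF part i(1)] i(2) c(2) by blast
  then show ?thesis using c i op unfolding evals_def by auto
qed


lemma near_mem:
  assumes part: "hier_partition P I xr" and opt: "global_opt f xs"
    and j: "j \<in> {1..I h}" and v: "f (xr h j) \<ge> f xs - e"
  shows "(SUP x\<in>P h j. f x) \<ge> f xs - e"
proof -
  have "xr h j \<in> P h j" using part j unfolding hier_partition_def by blast
  moreover have "bdd_above (f ` P h j)" using opt unfolding global_opt_def bdd_above_def by blast
  ultimately show ?thesis using v by (intro cSUP_upper2) auto
qed

lemma opened_step:
  assumes part: "hier_partition P I xr" and opt: "global_opt f xs"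
    and smooth: "local_smooth P I f xs \<nu> \<rho>"
    and run: "sequool_run P I xr f n Op"
    and op: "cell_index P I xs g \<in> Op g"
    and cnt: "real (near_opt_count P I f xs (Suc g) (3 * \<nu> * \<rho> ^ Suc g)) * real (Suc g) \<le> real (hmax n)"
  shows "cell_index P I xs (Suc g) \<in> Op (Suc g)"
proof (rule ccontr)
  define h where "h = Suc g"
  define c where "c = cell_index P I xs h"
  define E where "E = evals P I Op h"
  define S where "S = {i \<in> {1..I h}. (SUP x\<in>P h i. f x) \<ge> f xs - 3 * \<nu> * \<rho> ^ h}"
  assume nc: "cell_index P I xs (Suc g) \<notin> Op (Suc g)"
  hence nc: "c \<notin> Op h" unfolding c_def h_def .
  have cE: "c \<in> E" using child_eval[where Op=Op and g=g, OF part op] unfolding c_def E_def h_def .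
  have sm: "\<nu> > 0" "0 < \<rho>" "\<rho> < 1" and smx: "\<And>x. x \<in> P h c \<Longrightarrow> f x \<ge> f xs - \<nu> * \<rho> ^ h"
    using smooth unfolding local_smooth_def c_def by auto
  have cc: "c \<in> {1..I h}" "xs \<in> P h c" using cell_index_props(1)[OF part] unfolding c_def by auto
  have xrc: "xr h c \<in> P h c" using part cc(1) unfolding hier_partition_def by blast
  have fc: "f (xr h c) \<ge> f xs - \<nu> * \<rho> ^ h" using smx[OF xrc] .
  have le3: "\<nu> * \<rho> ^ h \<le> 3 * \<nu> * \<rho> ^ h" using sm by simp
  have inS: "j \<in> S" if "j \<in> {1..I h}" "f (xr h j) \<ge> f xs - \<nu> * \<rho> ^ h" for j
    using near_mem[OF part opt that(1), of "3 * \<nu> * \<rho> ^ h"] that le3 unfolding S_def by auto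
  have finS: "finite S" unfolding S_def by auto
  have cS: "c \<in> S" using inS[OF cc(1) fc] .
  have N: "near_opt_count P I f xs h (3 * \<nu> * \<rho> ^ h) = card S"
    unfolding near_opt_count_def S_def by simp
  have N1: "card S \<ge> 1" using finS cS by (metis One_nat_def Suc_leI card_gt_0_iff empty_iff)
  have "card S * h \<le> hmax n" using cnt N unfolding h_def
    by (metis of_nat_le_iff of_nat_mult)
  hence Nle: "card S \<le> hmax n div h" unfolding h_def by (simp add: less_eq_div_iff_mult_less_eq)
  have hle: "h \<le> hmax n" using \<open>card S * h \<le> hmax n\<close> N1
    by (metis dual_order.trans mult_1 mult_le_mono1)
  have "1 \<le> h" unfolding h_def by simp
  then have R: "Op h \<subseteq> E" "card (Op h) = min (hmax n div h) (card E)"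
      "\<forall>j\<in>Op h. \<forall>j'\<in>E - Op h. f (xr h j') \<le> f (xr h j)"
    using run hle unfolding sequool_run_def E_def by blast+
  have finE: "finite E" unfolding E_def evals_def h_def by auto
  have EI: "E \<subseteq> {1..I h}" unfolding E_def evals_def h_def by auto
  have "card (Op h) \<noteq> card E"
  proof
    assume "card (Op h) = card E"
    then have "Op h = E" using card_seteq[OF finE R(1)] by simp
    then show False using nc cE by simp
  qed
  then have cO: "card (Op h) = hmax n div h" using R(2) by linarith
  have "insert c (Op h) \<subseteq> S"
  proof
    fix j assume "j \<in> insert c (Op h)"
    then show "j \<in> S"
    proof
      assume "j \<in> Op h"
      then have "f (xr h c) \<le> f (xr h j)" using R(3) cE nc by blast
      moreover have "j \<in> {1..I h}" using \<open>j \<in> Op h\<close> R(1) EI by blast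
      ultimately show "j \<in> S" using inS fc by auto
    qed (use cS in simp)
  qed
  then have "card (insert c (Op h)) \<le> card S" using finS by (rule card_mono[rotated])
  moreover have "card (insert c (Op h)) = card (Op h) + 1"
    using nc finite_subset[OF R(1) finE] by simp
  ultimately show False using cO Nle by linarith
qed


lemma opened_upto:
  assumes part: "hier_partition P I xr" and opt: "global_opt f xs"
    and smooth: "local_smooth P I f xs \<nu> \<rho>"
    and run: "sequool_run P I xr f n Op"
    and cnt: "\<forall>k\<in>{1..K}. real (near_opt_count P I f xs k (3 * \<nu> * \<rho> ^ k)) * real k \<le> real (hmax n)"
  shows "cell_index P I xs K \<in> Op K"
  using cnt
proof (induction K)
  case 0
  then show ?case using cell_index_0[OF part] run unfolding sequool_run_def by simp
next
  case (Suc K)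
  then have "cell_index P I xs K \<in> Op K" by auto
  moreover have "real (near_opt_count P I f xs (Suc K) (3 * \<nu> * \<rho> ^ Suc K)) * real (Suc K) \<le> real (hmax n)"
    using Suc.prems by (metis atLeastAtMost_iff le_add1 order_refl plus_1_eq_Suc)
  ultimately show ?case by (rule opened_step[OF part opt smooth run])
qed

lemma regret_K:
  assumes part: "hier_partition P I xr" and opt: "global_opt f xs"
    and smooth: "local_smooth P I f xs \<nu> \<rho>"
    and run: "sequool_run P I xr f n Op"
    and out: "sequool_output P I xr f Op h i"
    and cnt: "\<forall>k\<in>{1..K}. real (near_opt_count P I f xs k (3 * \<nu> * \<rho> ^ k)) * real k \<le> real (hmax n)"
  shows "f xs - f (xr h i) \<le> \<nu> * \<rho> ^ Suc K"
proof -
  have "cell_index P I xs K \<in> Op K" using opened_upto[OF part opt smooth run cnt] .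
  then have ev: "cell_index P I xs (Suc K) \<in> evals P I Op (Suc K)"
    using child_eval[OF part] by blast
  let ?c = "cell_index P I xs (Suc K)"
  have cc: "?c \<in> {1..I (Suc K)}" using cell_index_props(1)[OF part] by blast
  have "xr (Suc K) ?c \<in> P (Suc K) ?c" using part cc unfolding hier_partition_def by blast
  then have "f (xr (Suc K) ?c) \<ge> f xs - \<nu> * \<rho> ^ Suc K"
    using smooth unfolding local_smooth_def by blast
  moreover have "f (xr (Suc K) ?c) \<le> f (xr h i)" using out ev unfolding sequool_output_def by blast
  ultimately show ?thesis by linarith
qed

lemma powr_exp_L: "0 < (\<rho>::real) \<Longrightarrow> \<rho> powr y = exp (- y * ln (1 / \<rho>))"
  by (simp add: powr_def ln_div)

lemma dim_in_set:
  assumes smooth: "local_smooth P I f xs \<nu> \<rho>" and C: "C > 1"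
    and ne: "near_opt_set P I f xs \<nu> C \<rho> \<noteq> {}"
  shows "near_opt_dim P I f xs \<nu> C \<rho> \<ge> 0"
    and "real (near_opt_count P I f xs k (3 * \<nu> * \<rho> ^ k)) \<le> C * \<rho> powr (- near_opt_dim P I f xs \<nu> C \<rho> * real k)"
proof -
  define S where "S = near_opt_set P I f xs \<nu> C \<rho>"
  define d where "d = near_opt_dim P I f xs \<nu> C \<rho>"
  define N where "N = real (near_opt_count P I f xs k (3 * \<nu> * \<rho> ^ k))"
  define L where "L = ln (1 / \<rho>)"
  have sm: "0 < \<rho>" "\<rho> < 1" using smooth unfolding local_smooth_def by auto
  have L: "L > 0" unfolding L_def using sm by simp
  have dS: "d = Inf S" unfolding d_def S_def near_opt_dim_def ..
  have neS: "S \<noteq> {}" using ne unfolding S_def .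
  have Sge: "\<And>x. x \<in> S \<Longrightarrow> x \<ge> 0" unfolding S_def near_opt_set_def by auto
  have Sk: "\<And>x. x \<in> S \<Longrightarrow> N \<le> C * exp (x * real k * L)"
    unfolding S_def near_opt_set_def N_def using powr_exp_L[OF sm(1)] L_def by auto
  show "d \<ge> 0" unfolding dS using neS Sge by (intro cInf_greatest) auto
  have bdd: "bdd_below S" using Sge unfolding bdd_below_def by blast
  have "N \<le> C * exp (d * real k * L)"
  proof (rule ccontr)
    assume A: "\<not> N \<le> C * exp (d * real k * L)"
    show False
    proof (cases "k = 0")
      case True
      obtain x where "x \<in> S" using neS by blast
      then show False using Sk[of x] A True by simp
    next
      case False
      have Cp: "C > 0" using C by simp
      have "exp (d * real k * L) < N / C" using A Cp by (simp add: field_simps)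
      then have N0: "N / C > 0" by (smt (verit) exp_gt_zero)
      have "d * real k * L < ln (N / C)"
        using \<open>exp (d * real k * L) < N / C\<close> N0 by (metis exp_less_cancel_iff exp_ln)
      then have "d < ln (N / C) / (real k * L)" using False L
        by (simp add: field_simps)
      then obtain x where x: "x \<in> S" "x < ln (N / C) / (real k * L)"
        using cInf_lessD[OF neS] dS by auto
      have "x * real k * L < ln (N / C)" using x(2) False L by (simp add: field_simps)
      then have "exp (x * real k * L) < N / C" using N0 by (metis exp_less_cancel_iff exp_ln)
      then have "C * exp (x * real k * L) < N" using Cp by (simp add: field_simps)
      then show False using Sk[OF x(1)] by simp
    qed
  qed
  then show "N \<le> C * \<rho> powr (- d * real k)"
    using powr_exp_L[OF sm(1)] unfolding L_def by simp
qed

theorem theorem2: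
  fixes f :: "'a \<Rightarrow> real" and P :: "nat \<Rightarrow> nat \<Rightarrow> 'a set" and I :: "nat \<Rightarrow> nat"
    and xr :: "nat \<Rightarrow> nat \<Rightarrow> 'a" and xs :: 'a and \<nu> \<rho> C :: real and n :: nat
    and Op :: "nat \<Rightarrow> nat set" and h i :: nat
  assumes part: "hier_partition P I xr"
    and opt: "global_opt f xs"
    and smooth: "local_smooth P I f xs \<nu> \<rho>"
    and C: "C > 1"
    and dfin: "near_opt_set P I f xs \<nu> C \<rho> \<noteq> {}"
    and n: "n \<ge> 1"
    and run: "sequool_run P I xr f n Op"
    and out: "sequool_output P I xr f Op h i"
  shows "(near_opt_dim P I f xs \<nu> C \<rho> = 0 \<longrightarrow>
            f xs - f (xr h i) \<le> \<nu> * \<rho> powr (real (hmax n) / C)) \<and>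
         (near_opt_dim P I f xs \<nu> C \<rho> > 0 \<longrightarrow>
            f xs - f (xr h i) \<le> \<nu> * exp (- (1 / near_opt_dim P I f xs \<nu> C \<rho>) *
               lambertW (near_opt_dim P I f xs \<nu> C \<rho> * ln (1 / \<rho>) / C * real (hmax n))))"
proof -
  define d where "d = near_opt_dim P I f xs \<nu> C \<rho>"
  define L where "L = ln (1 / \<rho>)"
  define H where "H = real (hmax n)"
  define N where "N k = real (near_opt_count P I f xs k (3 * \<nu> * \<rho> ^ k))" for k
  have sm: "\<nu> > 0" "0 < \<rho>" "\<rho> < 1" using smooth unfolding local_smooth_def by auto
  have L: "L > 0" unfolding L_def using sm by simp
  have Cp: "C > 0" using C by simp
  have H0: "H \<ge> 0" unfolding H_def by simp
  have d0: "d \<ge> 0" unfolding d_def by (rule dim_in_set(1)[OF smooth C dfin])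
  have Nk: "N k \<le> C * exp (d * real k * L)" for k
    using dim_in_set(2)[OF smooth C dfin, of k] powr_exp_L[OF sm(2)]
    unfolding N_def d_def L_def by simp
  have N0: "N k \<ge> 0" for k unfolding N_def by simp
  have rp: "\<rho> ^ m = exp (- real m * L)" for m
    using powr_exp_L[OF sm(2), of "real m"] powr_realpow[OF sm(2)] unfolding L_def by simp
  have reg: "f xs - f (xr h i) \<le> \<nu> * exp (- real (Suc K) * L)"
    if "\<forall>k\<in>{1..K}. N k * real k \<le> H" for K
  proof -
    have "f xs - f (xr h i) \<le> \<nu> * \<rho> ^ Suc K"
      using regret_K[OF part opt smooth run out, of K] that unfolding N_def H_def by blast
    then show ?thesis unfolding rp .
  qed
  have case0: "f xs - f (xr h i) \<le> \<nu> * \<rho> powr (H / C)" if "d = 0"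
  proof -
    define K where "K = nat \<lfloor>H / C\<rfloor>"
    have HC: "H / C \<ge> 0" using H0 Cp by simp
    have KK: "real K \<le> H / C" "H / C \<le> real K + 1" unfolding K_def using HC
      by linarith+
    have "\<forall>k\<in>{1..K}. N k * real k \<le> H"
    proof
      fix k assume k: "k \<in> {1..K}"
      have "N k \<le> C" using Nk[of k] that by simp
      moreover have "real k \<le> H / C" using k KK by auto
      ultimately have "N k * real k \<le> C * (H / C)" using N0 Cp by (intro mult_mono) auto
      then show "N k * real k \<le> H" using Cp by simp
    qed
    then have "f xs - f (xr h i) \<le> \<nu> * exp (- real (Suc K) * L)" by (rule reg)
    also have "\<dots> \<le> \<nu> * exp (- (H / C) * L)"
    proof -
      have "(H / C) * L \<le> real (Suc K) * L" using KK L by (intro mult_right_mono) auto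
      then have "exp (- real (Suc K) * L) \<le> exp (- (H / C) * L)" by (subst exp_le_cancel_iff) linarith
      then show ?thesis using sm by (intro mult_left_mono) auto
    qed
    also have "\<dots> = \<nu> * \<rho> powr (H / C)" using powr_exp_L[OF sm(2)] unfolding L_def by simp
    finally show ?thesis .
  qed
  have casep: "f xs - f (xr h i) \<le> \<nu> * exp (- (1 / d) * lambertW (d * L / C * H))" if "d > 0"
  proof -
    define A where "A = d * L / C * H"
    define W where "W = lambertW A"
    have A0: "A \<ge> 0" unfolding A_def using that L Cp H0 by simp
    have W: "W \<ge> 0" "W * exp W = A" using lambertW_prop[OF A0] unfolding W_def by auto
    define t where "t = W / (d * L)"
    define K where "K = nat \<lfloor>t\<rfloor>"
    have t0: "t \<ge> 0" unfolding t_def using W that L by simp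
    have KK: "real K \<le> t" "t \<le> real K + 1" unfolding K_def using t0 by linarith+
    have "\<forall>k\<in>{1..K}. N k * real k \<le> H"
    proof
      fix k assume k: "k \<in> {1..K}"
      define x where "x = d * real k * L"
      have x0: "x \<ge> 0" unfolding x_def using that L by simp
      have "real k \<le> t" using k KK by auto
      then have xW: "x \<le> W" unfolding x_def t_def using that L by (simp add: field_simps)
      have "x * exp x \<le> W * exp W" using xW x0 by (intro mult_mono) auto
      then have xe: "x * exp x \<le> A" using W(2) by simp
      have "N k * real k \<le> C * exp x * real k" using Nk[of k] unfolding x_def
        by (intro mult_right_mono) auto
      also have "\<dots> = C / (d * L) * (x * exp x)" unfolding x_def using that L by (simp add: field_simps)
      also have "\<dots> \<le> C / (d * L) * A" using xe that L Cp by (intro mult_left_mono) auto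
      also have "\<dots> = H" unfolding A_def using that L Cp by (simp add: field_simps)
      finally show "N k * real k \<le> H" .
    qed
    then have "f xs - f (xr h i) \<le> \<nu> * exp (- real (Suc K) * L)" by (rule reg)
    also have "\<dots> \<le> \<nu> * exp (- t * L)"
    proof -
      have "t * L \<le> real (Suc K) * L" using KK L by (intro mult_right_mono) auto
      then have "exp (- real (Suc K) * L) \<le> exp (- t * L)" by (subst exp_le_cancel_iff) linarith
      then show ?thesis using sm by (intro mult_left_mono) auto
    qed
    also have "\<dots> = \<nu> * exp (- (1 / d) * W)" unfolding t_def using that L by (simp add: field_simps)
    finally show ?thesis unfolding W_def A_def .
  qed
  show ?thesis using case0 casep unfolding d_def L_def H_def by blast
qed

end
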